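(* Let $n>1$ and $k>1$ be integers and let $t_1,\ldots,t_k$ be positive divisors of $n$. Consider the family GRDH with parameters $n,k,t_1,\ldots,t_k$. There exists $\varepsilon<1$ such that GRDH is $\varepsilon$-almost-universal if and only if $n$ is odd and $t_1=\cdots=t_k=1$ (i.e., the keys range over $(\mathbb{Z}_n^* )^k$). Moreover, if $n$ is odd and $t_1=\cdots=t_k=1$, then GRDH is $\frac{1}{p-1}$-almost-universal, where $p$ is the smallest prime divisor of $n$, and this bound is tight: there exist distinct $\mathbf{m},\mathbf{m}'\in\mathbb{Z}_n^k$ with $\Pr_{\mathbf{x}}[\Upsilon_{\mathbf{x}}(\mathbf{m})=\Upsilon_{\mathbf{x}}(\mathbf{m}')]=\frac{1}{p-1}$.
   Context: Let $n>1$, $k\ge1$ be integers and $t_1,\ldots,t_k$ positive divisors of $n$. The family GRDH consists of the functions $\Upsilon_{\mathbf{x}}:\mathbb{Z}_n^k\to\mathbb{Z}_n$, $\Upsilon_{\mathbf{x}}(\mathbf{m})=\sum_{i=1}^k m_ix_i \bmod n$, indexed by keys $\mathbf{x}=\langle x_1,\ldots,x_k\rangle\in\mathbb{Z}_n^k$ satisfying $\gcd(x_i,n)=t_i$ for $1\le i\le k$. When $t_1=\cdots=t_k=1$ (keys in $(\mathbb{Z}_n^* )^k$) the family is called RDH. All probabilities are over a key $\mathbf{x}$ chosen uniformly at random from the set of admissible keys. The family is $\varepsilon$-almost-universal if for all distinct $\mathbf{m},\mathbf{m}'\in\mathbb{Z}_n^k$, $\Pr_{\mathbf{x}}[\Upsilon_{\mathbf{x}}(\mathbf{m})=\Upsilon_{\mathbf{x}}(\mathbf{m}')]\le\varepsilon$.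 *)

theory Defs
  imports Complex_Main "HOL-Computational_Algebra.Primes"
begin

text \<open>Elements of Z_n^k are represented as functions nat => nat whose values at
indices i < k lie in {0..<n} and which vanish at indices i >= k (coordinates 0..k-1).\<close>

definition vecs :: "nat \<Rightarrow> nat \<Rightarrow> (nat \<Rightarrow> nat) set" where
  "vecs n k = {m. (\<forall>i<k. m i < n) \<and> (\<forall>i\<ge>k. m i = 0)}"

definition grdh_keys :: "nat \<Rightarrow> nat \<Rightarrow> (nat \<Rightarrow> nat) \<Rightarrow> (nat \<Rightarrow> nat) set" where
  "grdh_keys n k t = {x \<in> vecs n k. \<forall>i<k. gcd (x i) n = t i}"

definition grdh_hash :: "nat \<Rightarrow> nat \<Rightarrow> (nat \<Rightarrow> nat) \<Rightarrow> (nat \<Rightarrow> nat) \<Rightarrow> nat" where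
  "grdh_hash n k x m = (\<Sum>i<k. m i * x i) mod n"

definition coll_prob :: "nat \<Rightarrow> nat \<Rightarrow> (nat \<Rightarrow> nat) \<Rightarrow> (nat \<Rightarrow> nat) \<Rightarrow> (nat \<Rightarrow> nat) \<Rightarrow> real" where
  "coll_prob n k t m m' =
     real (card {x \<in> grdh_keys n k t. grdh_hash n k x m = grdh_hash n k x m'})
     / real (card (grdh_keys n k t))"

definition almost_universal :: "nat \<Rightarrow> nat \<Rightarrow> (nat \<Rightarrow> nat) \<Rightarrow> real \<Rightarrow> bool" where
  "almost_universal n k t \<epsilon> \<longleftrightarrow>
     (\<forall>m \<in> vecs n k. \<forall>m' \<in> vecs n k. m \<noteq> m' \<longrightarrow> coll_prob n k t m m' \<le> \<epsilon>)"

end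

theory Submission
  imports Defs "HOL-Number_Theory.Number_Theory"
begin

lemma finite_vecs: "finite (vecs n k)"
proof -
  let ?g = "\<lambda>m::nat\<Rightarrow>nat. map m [0..<k]"
  have inj: "inj_on ?g (vecs n k)"
  proof (rule inj_onI)
    fix a b assume a: "a \<in> vecs n k" and b: "b \<in> vecs n k" and e: "?g a = ?g b"
    show "a = b"
    proof
      fix i show "a i = b i"
      proof (cases "i < k")
        case True
        have "\<forall>x\<in>{0..<k}. a x = b x" using e by simp
        then show ?thesis using True by simp
      next
        case False then show ?thesis using a b by (simp add: vecs_def)
      qed
    qed
  qed
  have "?g ` vecs n k \<subseteq> {xs. set xs \<subseteq> {..<n} \<and> length xs = k}"
    by (auto simp: vecs_def)
  then have "finite (?g ` vecs n k)" by (rule finite_subset) (rule finite_lists_length_eq, simp)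
  then show ?thesis using inj finite_image_iff by blast
qed

lemma finite_keys: "finite (grdh_keys n k t)"
  using finite_vecs unfolding grdh_keys_def by simp

lemma keys_nonempty:
  assumes "n > 0" "\<forall>i<k. t i > 0 \<and> t i dvd n"
  shows "grdh_keys n k t \<noteq> {}"
proof -
  define x where "x = (\<lambda>i. if i < k then (if t i = n then 0 else t i) else 0)"
  have "x \<in> grdh_keys n k t"
  proof -
    have a: "x i < n \<and> gcd (x i) n = t i" if "i < k" for i
    proof -
      have "t i \<le> n" "t i dvd n" using assms that by (auto simp: dvd_imp_le)
      then show ?thesis using assms(1) that unfolding x_def
        by (cases "t i = n") (auto simp: gcd_nat.absorb1)
    qed
    have b: "x i = 0" if "\<not> i < k" for i using that unfolding x_def by simp
    show ?thesis unfolding grdh_keys_def vecs_def using a b by auto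
  qed
  then show ?thesis by auto
qed

lemma coll_one:
  assumes "n > 0" "\<forall>i<k. t i > 0 \<and> t i dvd n"
    and "\<forall>x\<in>grdh_keys n k t. grdh_hash n k x m = grdh_hash n k x m'"
  shows "coll_prob n k t m m' = 1"
proof -
  have "{x \<in> grdh_keys n k t. grdh_hash n k x m = grdh_hash n k x m'} = grdh_keys n k t"
    using assms(3) by auto
  moreover have "card (grdh_keys n k t) > 0"
    using keys_nonempty[OF assms(1,2)] finite_keys card_gt_0_iff by blast
  ultimately show ?thesis unfolding coll_prob_def by simp
qed

lemma prime_q:
  fixes d :: int and n :: nat
  assumes "n > 0" "\<not> int n dvd d"
  shows "\<exists>q::nat. prime q \<and> q dvd n \<and> (\<forall>z. int n dvd d * z \<longrightarrow> int q dvd z)"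
proof -
  define g where "g = gcd d (int n)"
  have g0: "g > 0" using assms unfolding g_def by (simp add: gcd_pos_int)
  define n' where "n' = int n div g"
  define d' where "d' = d div g"
  have nz: "d \<noteq> 0 \<or> int n \<noteq> 0" using assms by simp
  have cop: "coprime d' n'" unfolding d'_def n'_def g_def using div_gcd_coprime[OF nz] .
  have nn: "int n = n' * g" unfolding n'_def g_def by simp
  have dd: "d = d' * g" unfolding d'_def g_def by simp
  have n'1: "n' \<noteq> 1"
  proof
    assume "n' = 1"
    then have "int n = g" using nn by simp
    then have "int n dvd d" unfolding g_def by (metis gcd_dvd1)
    then show False using assms(2) by blast
  qed
  have "0 < n' * g" using nn assms(1) by simp
  then have n'pos: "n' > 0" using g0 by (simp add: zero_less_mult_iff)
  have "\<not> is_unit n'" using n'1 n'pos by auto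
  moreover have "n' \<noteq> 0" using n'pos by simp
  ultimately obtain q where q: "q dvd n'" "prime q" using prime_divisor_exists[of n'] by auto
  have q0: "q \<ge> 0" using q(2) prime_ge_0_int by blast
  have qn: "q dvd int n" using q(1) nn by simp
  have "prime (nat q)" using q(2) by simp
  moreover have "int (nat q) dvd int n" using qn q0 by simp
  then have "nat q dvd n" by (simp only: int_dvd_int_iff)
  moreover have "\<forall>z. int n dvd d * z \<longrightarrow> int (nat q) dvd z"
  proof (intro allI impI)
    fix z assume hz: "int n dvd d * z"
    have e1: "d * z = (d' * z) * g" using dd by (simp only: mult.commute mult.left_commute)
    have "n' * g dvd (d' * z) * g" using hz unfolding nn e1 .
    then have "n' dvd d' * z" using dvd_mult_cancel_right[of n' g "d' * z"] g0 by simp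
    moreover have "coprime n' d'" using cop by (simp add: coprime_commute)
    ultimately have "n' dvd z" using coprime_dvd_mult_right_iff[of n' d' z] by simp
    then have "q dvd z" using q(1) by (rule dvd_trans[rotated])
    then show "int (nat q) dvd z" using q0 by simp
  qed
  ultimately show ?thesis by blast
qed

lemma hash_iff:
  "grdh_hash n k x m = grdh_hash n k x m' \<longleftrightarrow>
   int n dvd (\<Sum>i<k. (int (m i) - int (m' i)) * int (x i))"
proof -
  have "grdh_hash n k x m = grdh_hash n k x m' \<longleftrightarrow>
     int (\<Sum>i<k. m i * x i) mod int n = int (\<Sum>i<k. m' i * x i) mod int n"
    unfolding grdh_hash_def by (metis of_nat_eq_iff zmod_int)
  also have "\<dots> \<longleftrightarrow> int n dvd int (\<Sum>i<k. m i * x i) - int (\<Sum>i<k. m' i * x i)"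
    by (simp add: mod_eq_dvd_iff)
  also have "int (\<Sum>i<k. m i * x i) - int (\<Sum>i<k. m' i * x i)
       = (\<Sum>i<k. (int (m i) - int (m' i)) * int (x i))"
    by (simp add: sum_subtractf[symmetric] left_diff_distrib)
  finally show ?thesis .
qed

lemma D_diff:
  fixes m m' x y :: "nat \<Rightarrow> nat" and j k :: nat
  assumes "j < k" "\<forall>i. i \<noteq> j \<longrightarrow> x i = y i"
  shows "(\<Sum>i<k. (int (m i) - int (m' i)) * int (x i)) - (\<Sum>i<k. (int (m i) - int (m' i)) * int (y i))
     = (int (m j) - int (m' j)) * (int (x j) - int (y j))"
proof -
  have "(\<Sum>i<k. (int (m i) - int (m' i)) * int (x i)) - (\<Sum>i<k. (int (m i) - int (m' i)) * int (y i))
      = (\<Sum>i<k. (int (m i) - int (m' i)) * (int (x i) - int (y i)))"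
    by (simp add: sum_subtractf[symmetric] right_diff_distrib)
  also have "\<dots> = (\<Sum>i<k. if i = j then (int (m j) - int (m' j)) * (int (x j) - int (y j)) else 0)"
    using assms(2) by (intro sum.cong) auto
  also have "\<dots> = (int (m j) - int (m' j)) * (int (x j) - int (y j))"
  proof -
    have "\<And>c. (\<Sum>i<k. if i = j then c else 0) = (c::int)" using assms(1) by simp
    then show ?thesis by blast
  qed
  finally show ?thesis .
qed

lemma coprime_small:
  fixes r p n :: nat
  assumes "0 < r" "r < p" "\<forall>q. prime q \<and> q dvd n \<longrightarrow> p \<le> q"
  shows "coprime r n"
proof (rule ccontr)
  assume "\<not> coprime r n"
  then have "gcd r n \<noteq> 1" using coprime_iff_gcd_eq_1 by blast
  then obtain q where q0: "prime q" "q dvd gcd r n" using prime_factor_nat[of "gcd r n"] by blast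
  then have q: "prime q" "q dvd r" "q dvd n" by simp_all
  have "q \<le> r" using dvd_imp_le[OF q(2) assms(1)] .
  moreover have "p \<le> q" using assms(3) q by blast
  ultimately show False using assms(2) by simp
qed

definition Fm :: "nat \<Rightarrow> nat \<Rightarrow> nat \<times> (nat \<Rightarrow> nat) \<Rightarrow> (nat \<Rightarrow> nat)" where
  "Fm n j rx = (snd rx)(j := (fst rx * snd rx j) mod n)"

lemma Fm_maps:
  assumes "n > 1" "j < k" "\<forall>i<k. t i = 1" "\<forall>q. prime q \<and> q dvd n \<longrightarrow> p \<le> q"
    and "r \<in> {1..<p}" "x \<in> grdh_keys n k t"
  shows "Fm n j (r, x) \<in> grdh_keys n k t"
proof -
  have cr: "coprime r n" using coprime_small[of r p n] assms(4,5) by simp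
  have "gcd (x j) n = 1" using assms(2,3,6) by (simp add: grdh_keys_def)
  then have cx: "coprime (x j) n" by (simp only: coprime_iff_gcd_eq_1)
  have "coprime ((r * x j) mod n) n" using cr cx assms(1) by simp
  then have g1: "gcd ((r * x j) mod n) n = 1" by (simp only: coprime_iff_gcd_eq_1)
  have xv: "\<forall>i<k. x i < n" "\<forall>i\<ge>k. x i = 0" "\<forall>i<k. gcd (x i) n = 1"
    using assms(3,6) unfolding grdh_keys_def vecs_def by auto
  have lt: "(r * x j) mod n < n" using assms(1) by simp
  define v where "v = (r * x j) mod n"
  have F: "Fm n j (r, x) = x(j := v)" unfolding Fm_def v_def by simp
  have "x(j := v) \<in> grdh_keys n k t"
    unfolding grdh_keys_def vecs_def mem_Collect_eq
  proof (intro conjI allI impI)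
    fix i assume "i < k" then show "(x(j := v)) i < n" using xv(1) lt v_def by (cases "i = j") simp_all
  next
    fix i assume "k \<le> i" then show "(x(j := v)) i = 0" using xv(2) assms(2) by (cases "i = j") simp_all
  next
    fix i assume "i < k" then show "gcd ((x(j := v)) i) n = t i" using xv(3) g1 v_def assms(3) by (cases "i = j") simp_all
  qed
  then show ?thesis using F by simp
qed

lemma mod_eq_int_dvd:
  assumes "(a::nat) mod n = b mod n" shows "int n dvd int a - int b"
proof -
  have "int a mod int n = int b mod int n" using assms by (metis of_nat_mod)
  then show ?thesis by (simp add: mod_eq_dvd_iff)
qed

lemma small_dvd_zero: "int n dvd z \<Longrightarrow> \<bar>z\<bar> < int n \<Longrightarrow> z = 0"
proof (rule ccontr)
  assume "int n dvd z" "\<bar>z\<bar> < int n" "z \<noteq> 0"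
  then have "\<bar>int n\<bar> \<le> \<bar>z\<bar>" using dvd_imp_le_int by blast
  then show False using \<open>\<bar>z\<bar> < int n\<close> by simp
qed

lemma Fm_inj:
  assumes "n > 1" "j < k" "\<forall>i<k. t i = 1" "\<forall>q. prime q \<and> q dvd n \<longrightarrow> p \<le> q"
    and "m j \<noteq> m' j" "m \<in> vecs n k" "m' \<in> vecs n k"
  shows "inj_on (Fm n j) ({1..<p} \<times> {x \<in> grdh_keys n k t. grdh_hash n k x m = grdh_hash n k x m'})"
proof (rule inj_onI)
  define d where "d = int (m j) - int (m' j)"
  have "m j < n" "m' j < n" using assms(2,6,7) by (auto simp: vecs_def)
  then have dl: "\<bar>d\<bar> < int n" unfolding d_def by linarith
  have d0: "d \<noteq> 0" using assms(5) unfolding d_def by simp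
  have nd: "\<not> int n dvd d" using small_dvd_zero[of n d] dl d0 by blast
  obtain q where q: "prime q" "q dvd n" "\<forall>z. int n dvd d * z \<longrightarrow> int q dvd z"
    using prime_q[OF _ nd] assms(1) by (metis less_trans zero_less_one)
  have pq: "p \<le> q" using assms(4) q by blast
  fix a b assume a: "a \<in> {1..<p} \<times> {x \<in> grdh_keys n k t. grdh_hash n k x m = grdh_hash n k x m'}"
    and b: "b \<in> {1..<p} \<times> {x \<in> grdh_keys n k t. grdh_hash n k x m = grdh_hash n k x m'}"
    and e: "Fm n j a = Fm n j b"
  obtain r x where ax: "a = (r, x)" by (cases a) blast
  obtain s y where bb: "b = (s, y)" by (cases b) blast
  have r: "1 \<le> r" "r < p" and s: "1 \<le> s" "s < p" using a b ax bb by auto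
  have xK: "x \<in> grdh_keys n k t" and yK: "y \<in> grdh_keys n k t" using a b ax bb by auto
  have hx: "int n dvd (\<Sum>i<k. (int (m i) - int (m' i)) * int (x i))"
    using a ax hash_iff[of n k x m m'] by simp
  have hy: "int n dvd (\<Sum>i<k. (int (m i) - int (m' i)) * int (y i))"
    using b bb hash_iff[of n k y m m'] by simp
  have off: "\<forall>i. i \<noteq> j \<longrightarrow> x i = y i"
  proof (intro allI impI)
    fix i assume "i \<noteq> j"
    then show "x i = y i" using fun_cong[OF e, of i] ax bb by (simp add: Fm_def)
  qed
  have atj: "(r * x j) mod n = (s * y j) mod n"
    using fun_cong[OF e, of j] ax bb by (simp add: Fm_def)
  have eqD: "(\<Sum>i<k. (int (m i) - int (m' i)) * int (x i)) - (\<Sum>i<k. (int (m i) - int (m' i)) * int (y i))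
     = d * (int (x j) - int (y j))"
    using D_diff[OF assms(2) off, of m m'] unfolding d_def .
  have "int n dvd d * (int (x j) - int (y j))"
    using dvd_diff[OF hx hy] unfolding eqD .
  then have q1: "int q dvd int (x j) - int (y j)" using q(3) by blast
  have "int n dvd int (r * x j) - int (s * y j)" using mod_eq_int_dvd[OF atj] .
  then have q2: "int q dvd int r * int (x j) - int s * int (y j)"
    using q(2) by (metis dvd_trans int_dvd_int_iff of_nat_mult)
  have "int r * int (x j) - int s * int (y j) - int s * (int (x j) - int (y j))
        = (int r - int s) * int (x j)" by (simp add: algebra_simps)
  then have q3: "int q dvd (int r - int s) * int (x j)"
    using dvd_diff[OF q2 dvd_mult[OF q1, of "int s"]] by (simp add: ac_simps)
  have qp: "prime (int q)" using q(1) by simp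
  have "gcd (x j) n = 1" using xK assms(2,3) by (simp add: grdh_keys_def)
  then have cx: "coprime (x j) n" by (simp only: coprime_iff_gcd_eq_1)
  have "\<not> int q dvd int (x j)"
  proof
    assume "int q dvd int (x j)"
    then have "q dvd x j" by simp
    then have "is_unit q" using coprime_common_divisor[OF cx _ q(2)] by blast
    then show False using q(1) not_prime_unit by blast
  qed
  then have "int q dvd int r - int s" using q3 prime_dvd_mult_iff[OF qp] by simp
  moreover have "\<bar>int r - int s\<bar> < int q" using r s pq by linarith
  ultimately have "int r - int s = 0" using small_dvd_zero[of q] by blast
  then have rs: "r = s" by simp
  have cr: "coprime (int r) (int n)" using coprime_small[of r p n] r assms(4) by (simp add: coprime_int_iff)
  have "int n dvd int r * (int (x j) - int (y j))"
    using \<open>int n dvd int (r * x j) - int (s * y j)\<close> rs by (simp add: algebra_simps)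
  then have "int n dvd int (x j) - int (y j)" using cr coprime_dvd_mult_right_iff[of "int n" "int r"]
    by (simp add: coprime_commute)
  moreover have "x j < n" "y j < n" using xK yK assms(2) by (auto simp: grdh_keys_def vecs_def)
  moreover have "\<bar>int (x j) - int (y j)\<bar> < int n" using \<open>x j < n\<close> \<open>y j < n\<close> by linarith
  ultimately have "int (x j) - int (y j) = 0" using small_dvd_zero[of n] by blast
  then have xyj: "x j = y j" by simp
  have "x = y"
  proof
    fix i show "x i = y i" using off xyj by (cases "i = j") auto
  qed
  then show "a = b" using ax bb rs by simp
qed


lemma sum_support:
  fixes f :: "nat \<Rightarrow> nat"
  assumes "S \<subseteq> {..<k}" "\<forall>i. i \<notin> S \<longrightarrow> f i = 0"
  shows "(\<Sum>i<k. f i) = (\<Sum>i\<in>S. f i)"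
  using sum.mono_neutral_right[of "{..<k}" S f] assms by blast

lemma hash_delta:
  assumes "j < k"
  shows "grdh_hash n k x (\<lambda>i. if i = j then c else 0) = (c * x j) mod n"
proof -
  have "(\<Sum>i<k. (if i = j then c else 0) * x i) = (\<Sum>i\<in>{j}. (if i = j then c else 0) * x i)"
    using assms by (intro sum_support) auto
  then show ?thesis unfolding grdh_hash_def by simp
qed

lemma hash_zero: "grdh_hash n k x (\<lambda>i. 0) = 0"
  unfolding grdh_hash_def by simp

lemma hash_two:
  assumes "1 < k"
  shows "grdh_hash n k x (\<lambda>i. if i = 0 \<or> i = 1 then c else 0) = (c * x 0 + c * x 1) mod n"
proof -
  have "(\<Sum>i<k. (if i = 0 \<or> i = 1 then c else 0) * x i) = (\<Sum>i\<in>{0,1}. (if i = 0 \<or> i = 1 then c else 0) * x i)"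
    using assms by (intro sum_support) auto
  then show ?thesis unfolding grdh_hash_def by simp
qed

lemma ub:
  assumes "n > 1" "\<forall>i<k. t i = 1" "\<forall>q. prime q \<and> q dvd n \<longrightarrow> p \<le> q" "p \<ge> 2"
    and "m \<in> vecs n k" "m' \<in> vecs n k" "m \<noteq> m'"
  shows "coll_prob n k t m m' \<le> 1 / (real p - 1)"
proof -
  obtain j where mj: "m j \<noteq> m' j" using assms(7) by blast
  have jk: "j < k"
  proof (rule ccontr)
    assume "\<not> j < k"
    then have "m j = 0" "m' j = 0" using assms(5,6) by (simp_all add: vecs_def)
    then show False using mj by simp
  qed
  define K where "K = grdh_keys n k t"
  define C where "C = {x \<in> grdh_keys n k t. grdh_hash n k x m = grdh_hash n k x m'}"
  have inj: "inj_on (Fm n j) ({1..<p} \<times> C)"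
    unfolding C_def using Fm_inj[OF assms(1) jk assms(2,3) mj assms(5,6)] .
  have sub: "Fm n j ` ({1..<p} \<times> C) \<subseteq> K"
  proof
    fix y assume "y \<in> Fm n j ` ({1..<p} \<times> C)"
    then obtain r x where "r \<in> {1..<p}" "x \<in> C" "y = Fm n j (r, x)" by blast
    then show "y \<in> K" unfolding K_def C_def using Fm_maps[OF assms(1) jk assms(2,3)] by blast
  qed
  have fK: "finite K" unfolding K_def by (rule finite_keys)
  have "card ({1..<p} \<times> C) \<le> card K" using card_inj_on_le[OF inj sub fK] .
  moreover have fC: "finite C" unfolding C_def using finite_keys by simp
  ultimately have le: "(p - 1) * card C \<le> card K" by (simp add: card_cartesian_product)
  have tpos: "\<forall>i<k. t i > 0 \<and> t i dvd n" using assms(2) by simp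
  have Kpos: "card K > 0" unfolding K_def using keys_nonempty[OF _ tpos] assms(1) finite_keys card_gt_0_iff
    by (metis less_trans zero_less_one)
  have "real (p - 1) * real (card C) \<le> real (card K)" using le by (metis of_nat_le_iff of_nat_mult)
  moreover have "real (p - 1) = real p - 1" using assms(4) by simp
  ultimately have le2: "(real p - 1) * real (card C) \<le> real (card K)" by simp
  have p1: "real p - 1 > 0" using assms(4) by simp
  have "coll_prob n k t m m' = real (card C) / real (card K)"
    unfolding coll_prob_def C_def K_def ..
  also have "\<dots> \<le> 1 / (real p - 1)"
    using le2 p1 Kpos by (simp add: divide_simps mult.commute)
  finally show ?thesis .
qed

lemma odd_of_gcd1:
  fixes a n :: nat
  assumes "even n" "gcd a n = 1" shows "odd a"
proof
  assume "even a"
  then have "2 dvd gcd a n" using assms(1) by simp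
  then show False using assms(2) by simp
qed

lemma bad:
  assumes "n > 1" "1 < k" "\<forall>i<k. t i > 0 \<and> t i dvd n"
    and "\<not> (odd n \<and> (\<forall>i<k. t i = 1))"
  shows "\<exists>m\<in>vecs n k. \<exists>m'\<in>vecs n k. m \<noteq> m' \<and> coll_prob n k t m m' = 1"
proof (cases "\<exists>j<k. t j \<noteq> 1")
  case True
  then obtain j where j: "j < k" "t j \<noteq> 1" by blast
  have tj: "t j > 0" "t j dvd n" using assms(3) j(1) by auto
  then have t2: "t j > 1" using j(2) by linarith
  define c where "c = n div t j"
  have nc: "n = c * t j" unfolding c_def using tj(2) by simp
  have c0: "c > 0" using nc assms(1) by (metis gr0I mult_is_0 not_one_less_zero)
  have cn: "c < n" using nc t2 c0 by simp
  define m where "m = (\<lambda>i::nat. if i = j then c else 0)"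
  define m' where "m' = (\<lambda>i::nat. 0::nat)"
  have mv: "m \<in> vecs n k" using cn j(1) assms(1) unfolding m_def vecs_def by auto
  have m'v: "m' \<in> vecs n k" using assms(1) unfolding m'_def vecs_def by auto
  have ne: "m \<noteq> m'" using c0 unfolding m_def m'_def by (metis less_irrefl)
  have "\<forall>x\<in>grdh_keys n k t. grdh_hash n k x m = grdh_hash n k x m'"
  proof
    fix x assume x: "x \<in> grdh_keys n k t"
    then have "gcd (x j) n = t j" using j(1) unfolding grdh_keys_def by blast
    then have "t j dvd x j" by (metis gcd_dvd1)
    then obtain e where e: "x j = t j * e" by blast
    have "c * x j = n * e" using e nc by simp
    then have "(c * x j) mod n = 0" by simp
    then show "grdh_hash n k x m = grdh_hash n k x m'"
      unfolding m_def m'_def using hash_delta[OF j(1)] hash_zero by simp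
  qed
  then have "coll_prob n k t m m' = 1" using coll_one assms(1,3) by (metis less_trans zero_less_one)
  then show ?thesis using mv m'v ne by blast
next
  case False
  then have ev: "even n" using assms(4) by blast
  define c where "c = n div 2"
  have nc: "n = c * 2" unfolding c_def using ev by simp
  have c0: "c > 0" using nc assms(1) by simp
  have cn: "c < n" using nc c0 by simp
  define m where "m = (\<lambda>i::nat. if i = 0 \<or> i = 1 then c else 0)"
  define m' where "m' = (\<lambda>i::nat. 0::nat)"
  have mv: "m \<in> vecs n k" using cn assms(1,2) unfolding m_def vecs_def by auto
  have m'v: "m' \<in> vecs n k" using assms(1) unfolding m'_def vecs_def by auto
  have ne: "m \<noteq> m'" using c0 unfolding m_def m'_def by (metis less_irrefl)
  have "\<forall>x\<in>grdh_keys n k t. grdh_hash n k x m = grdh_hash n k x m'"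
  proof
    fix x assume x: "x \<in> grdh_keys n k t"
    have g0: "gcd (x 0) n = 1" and g1: "gcd (x 1) n = 1" using x False assms(2) unfolding grdh_keys_def by auto
    have "odd (x 0)" using odd_of_gcd1[OF ev g0] .
    moreover have "odd (x 1)" using odd_of_gcd1[OF ev g1] .
    ultimately have "even (x 0 + x 1)" by simp
    then obtain e where e: "x 0 + x 1 = 2 * e" by blast
    have "c * x 0 + c * x 1 = c * (x 0 + x 1)" by (simp add: add_mult_distrib2)
    also have "\<dots> = n * e" using e nc by simp
    finally have "c * x 0 + c * x 1 = n * e" .
    then have "(c * x 0 + c * x 1) mod n = 0" by simp
    then show "grdh_hash n k x m = grdh_hash n k x m'"
      unfolding m_def m'_def using hash_two[OF assms(2)] hash_zero by simp
  qed
  then have "coll_prob n k t m m' = 1" using coll_one assms(1,3) by (metis less_trans zero_less_one)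
  then show ?thesis using mv m'v ne by blast
qed


lemma upd_keys:
  assumes "x \<in> grdh_keys n k t" "j < k" "\<forall>i<k. t i = 1" "v < n" "coprime v n"
  shows "x(j := v) \<in> grdh_keys n k t"
proof -
  have g1: "gcd v n = 1" using assms(5) by (simp only: coprime_iff_gcd_eq_1)
  have xv: "\<forall>i<k. x i < n" "\<forall>i\<ge>k. x i = 0" "\<forall>i<k. gcd (x i) n = 1"
    using assms(1,3) unfolding grdh_keys_def vecs_def by auto
  show ?thesis
    unfolding grdh_keys_def vecs_def mem_Collect_eq
  proof (intro conjI allI impI)
    fix i assume "i < k" then show "(x(j := v)) i < n" using xv(1) assms(4) by (cases "i = j") simp_all
  next
    fix i assume "k \<le> i" then show "(x(j := v)) i = 0" using xv(2) assms(2) by (cases "i = j") simp_all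
  next
    fix i assume "i < k" then show "gcd ((x(j := v)) i) n = t i" using xv(3) g1 assms(3) by (cases "i = j") simp_all
  qed
qed

lemma keys_coprime:
  assumes "x \<in> grdh_keys n k t" "j < k" "\<forall>i<k. t i = 1"
  shows "coprime (x j) n" "x j < n"
proof -
  have "gcd (x j) n = 1" using assms unfolding grdh_keys_def by simp
  then show "coprime (x j) n" by (simp only: coprime_iff_gcd_eq_1)
  show "x j < n" using assms unfolding grdh_keys_def vecs_def by simp
qed

lemma tight:
  assumes "n > 1" "1 < k" "\<forall>i<k. t i = 1" "prime p" "p dvd n"
    and pmin: "\<forall>q. prime q \<and> q dvd n \<longrightarrow> p \<le> q"
  shows "\<exists>m\<in>vecs n k. \<exists>m'\<in>vecs n k. m \<noteq> m' \<and> coll_prob n k t m m' = 1 / (real p - 1)"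
proof -
  have p2: "p \<ge> 2" using assms(4) prime_ge_2_nat by blast
  define c where "c = n div p"
  have nc: "n = c * p" unfolding c_def using assms(5) by simp
  have c0: "c > 0" using nc assms(1) by (metis gr0I mult_is_0 not_one_less_zero)
  have cn: "c < n" using nc p2 c0 by simp
  have k0: "0 < k" using assms(2) by simp
  define m where "m = (\<lambda>i::nat. if i = 0 then c else 0)"
  define m' where "m' = (\<lambda>i::nat. if i = 1 then c else 0)"
  have mv: "m \<in> vecs n k" using cn k0 unfolding m_def vecs_def by auto
  have m'v: "m' \<in> vecs n k" using cn assms(2) unfolding m'_def vecs_def by auto
  have m0: "m 0 \<noteq> m' 0" using c0 unfolding m_def m'_def by simp
  then have ne: "m \<noteq> m'" by metis
  have cmod: "(c * a) mod n = c * (a mod p)" for a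
    unfolding nc by (rule mod_mult_mult1)
  have hiff: "grdh_hash n k y m = grdh_hash n k y m' \<longleftrightarrow> y 0 mod p = y 1 mod p" for y
  proof -
    have "grdh_hash n k y m = (c * y 0) mod n" unfolding m_def using hash_delta[OF k0] .
    moreover have "grdh_hash n k y m' = (c * y 1) mod n" unfolding m'_def using hash_delta[OF assms(2)] .
    ultimately show ?thesis using cmod c0 by simp
  qed
  define K where "K = grdh_keys n k t"
  define C where "C = {x \<in> grdh_keys n k t. grdh_hash n k x m = grdh_hash n k x m'}"
  have inj: "inj_on (Fm n 0) ({1..<p} \<times> C)"
    unfolding C_def using Fm_inj[OF assms(1) k0 assms(3) pmin m0 mv m'v] .
  have sub: "Fm n 0 ` ({1..<p} \<times> C) \<subseteq> K"
  proof
    fix y assume "y \<in> Fm n 0 ` ({1..<p} \<times> C)"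
    then obtain r x where "r \<in> {1..<p}" "x \<in> C" "y = Fm n 0 (r, x)" by blast
    then show "y \<in> K" unfolding K_def C_def using Fm_maps[OF assms(1) k0 assms(3) pmin] by blast
  qed
  have sup: "K \<subseteq> Fm n 0 ` ({1..<p} \<times> C)"
  proof
    fix x assume xK: "x \<in> K"
    have cx0: "coprime (x 0) n" and x0n: "x 0 < n"
      using keys_coprime[of x n k t 0] xK k0 assms(3) unfolding K_def by auto
    have cx1: "coprime (x 1) n"
      using keys_coprime[of x n k t 1] xK assms(2,3) unfolding K_def by auto
    have cx0p: "coprime (x 0) p" using cx0 unfolding nc by simp
    have cx1p: "coprime (x 1) p" using cx1 unfolding nc by simp
    obtain u where u: "[x 1 * u = Suc 0] (mod p)" using cong_solve_coprime_nat[OF cx1p] by blast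
    define r0 where "r0 = (x 0 * u) mod p"
    have "[r0 = x 0 * u] (mod p)" unfolding r0_def cong_def by simp
    then have "[r0 * x 1 = x 0 * u * x 1] (mod p)" by (rule cong_mult) (rule cong_refl)
    also have "x 0 * u * x 1 = x 0 * (x 1 * u)" by (simp add: ac_simps)
    also have "[x 0 * (x 1 * u) = x 0 * Suc 0] (mod p)" using u by (rule cong_scalar_left)
    finally have r0x: "[r0 * x 1 = x 0] (mod p)" by simp
    have r0ne: "r0 \<noteq> 0"
    proof
      assume "r0 = 0"
      then have "[0 = x 0] (mod p)" using r0x by simp
      then have "p dvd x 0" unfolding cong_def by (simp add: dvd_eq_mod_eq_0)
      then have "is_unit p" using coprime_common_divisor[OF cx0p _ dvd_refl] by blast
      then show False using assms(4) not_prime_unit by blast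
    qed
    have r0p: "r0 < p" unfolding r0_def using p2 by simp
    then have r0in: "r0 \<in> {1..<p}" using r0ne by simp
    have cr0: "coprime r0 n" using coprime_small[of r0 p n] r0ne r0p pmin by simp
    obtain w where w: "[r0 * w = Suc 0] (mod n)" using cong_solve_coprime_nat[OF cr0] by blast
    have cw: "coprime w n"
      using coprime_iff_invertible_nat[of w n] w by (metis mult.commute)
    define y0 where "y0 = (w * x 0) mod n"
    have cy0: "coprime y0 n" unfolding y0_def using cw cx0 assms(1) by simp
    have y0n: "y0 < n" unfolding y0_def using assms(1) by simp
    define y where "y = x(0 := y0)"
    have yK: "y \<in> K" unfolding y_def K_def using upd_keys[OF _ k0 assms(3) y0n cy0] xK K_def by blast
    have wp: "[r0 * w = Suc 0] (mod p)" using cong_dvd_modulus_nat[OF w assms(5)] .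
    have "[w * x 0 = w * (r0 * x 1)] (mod p)" using cong_scalar_left[OF cong_sym[OF r0x]] .
    also have "w * (r0 * x 1) = (r0 * w) * x 1" by (simp add: ac_simps)
    also have "[(r0 * w) * x 1 = Suc 0 * x 1] (mod p)" using wp by (rule cong_mult) (rule cong_refl)
    finally have "[w * x 0 = x 1] (mod p)" by simp
    then have "(w * x 0) mod p = x 1 mod p" unfolding cong_def .
    moreover have "y0 mod p = (w * x 0) mod p" unfolding y0_def using mod_mod_cancel[OF assms(5)] .
    ultimately have "y 0 mod p = y 1 mod p" unfolding y_def by simp
    then have yC: "y \<in> C" unfolding C_def using yK hiff K_def by blast
    have "(r0 * y0) mod n = (r0 * (w * x 0)) mod n" unfolding y0_def by (simp add: mod_mult_right_eq)
    also have "r0 * (w * x 0) = (r0 * w) * x 0" by (simp add: ac_simps)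
    also have "((r0 * w) * x 0) mod n = (Suc 0 * x 0) mod n"
      using cong_mult[OF w cong_refl[of "x 0"]] unfolding cong_def .
    also have "\<dots> = x 0" using x0n by simp
    finally have "(r0 * y0) mod n = x 0" .
    then have "Fm n 0 (r0, y) = x" unfolding Fm_def y_def by auto
    then show "x \<in> Fm n 0 ` ({1..<p} \<times> C)" using r0in yC by force
  qed
  have img: "Fm n 0 ` ({1..<p} \<times> C) = K" using sub sup by blast
  have fC: "finite C" unfolding C_def using finite_keys by simp
  have "card K = card ({1..<p} \<times> C)" using card_image[OF inj] img by simp
  also have "\<dots> = (p - 1) * card C" using fC by (simp add: card_cartesian_product)
  finally have cK: "card K = (p - 1) * card C" .
  have tpos: "\<forall>i<k. t i > 0 \<and> t i dvd n" using assms(3) by simp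
  have Kpos: "card K > 0" unfolding K_def using keys_nonempty[OF _ tpos] assms(1) finite_keys card_gt_0_iff
    by (metis less_trans zero_less_one)
  then have Cpos: "card C > 0" using cK by simp
  have rK: "real (card K) = (real p - 1) * real (card C)" using cK p2 by (simp add: of_nat_diff)
  have "coll_prob n k t m m' = real (card C) / real (card K)"
    unfolding coll_prob_def C_def K_def ..
  also have "\<dots> = 1 / (real p - 1)" using rK Cpos by simp
  finally show ?thesis using mv m'v ne by blast
qed

theorem mainTheorem2:
  fixes n k :: nat and t :: "nat \<Rightarrow> nat"
  assumes "n > 1" and "k > 1"
    and "\<forall>i<k. t i > 0 \<and> t i dvd n"
  shows "((\<exists>\<epsilon><1. almost_universal n k t \<epsilon>) \<longleftrightarrow> (odd n \<and> (\<forall>i<k. t i = 1)))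
    \<and> ((odd n \<and> (\<forall>i<k. t i = 1)) \<longrightarrow>
        (let p = Min (prime_factors n) in
          almost_universal n k t (1 / (real p - 1)) \<and>
          (\<exists>m \<in> vecs n k. \<exists>m' \<in> vecs n k. m \<noteq> m' \<and>
              coll_prob n k t m m' = 1 / (real p - 1))))"
proof -
  define p where "p = Min (prime_factors n)"
  have n0: "n \<noteq> 0" using assms(1) by simp
  obtain q0 where q0: "prime q0" "q0 dvd n" using prime_factor_nat[of n] assms(1) by auto
  have q0in: "q0 \<in> prime_factors n" using q0 n0 by (simp add: in_prime_factors_iff)
  have fin: "finite (prime_factors n)" by simp
  have "p \<in> prime_factors n" unfolding p_def using Min_in[OF fin] q0in by blast
  then have pp: "prime p" "p dvd n" by (simp_all add: in_prime_factors_iff)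
  have pmin: "\<forall>q. prime q \<and> q dvd n \<longrightarrow> p \<le> q"
  proof (intro allI impI)
    fix q assume "prime q \<and> q dvd n"
    then have "q \<in> prime_factors n" using n0 by (simp add: in_prime_factors_iff)
    then show "p \<le> q" unfolding p_def using Min_le[OF fin] by blast
  qed
  have p2: "p \<ge> 2" using pp(1) prime_ge_2_nat by blast
  have good_au: "almost_universal n k t (1 / (real p - 1))" if g: "\<forall>i<k. t i = 1"
    unfolding almost_universal_def using ub[OF assms(1) g pmin p2] by blast
  have part1: "(\<exists>\<epsilon><1. almost_universal n k t \<epsilon>) \<longleftrightarrow> (odd n \<and> (\<forall>i<k. t i = 1))"
  proof
    assume "\<exists>\<epsilon><1. almost_universal n k t \<epsilon>"
    then obtain e where e: "e < 1" "almost_universal n k t e" by blast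
    show "odd n \<and> (\<forall>i<k. t i = 1)"
    proof (rule ccontr)
      assume "\<not> (odd n \<and> (\<forall>i<k. t i = 1))"
      then obtain m m' where mm: "m \<in> vecs n k" "m' \<in> vecs n k" "m \<noteq> m'" "coll_prob n k t m m' = 1"
        using bad[OF assms(1,2,3)] by blast
      then have "coll_prob n k t m m' \<le> e" using e(2) unfolding almost_universal_def by blast
      then show False using mm(4) e(1) by simp
    qed
  next
    assume h: "odd n \<and> (\<forall>i<k. t i = 1)"
    have "p \<noteq> 2" using h pp(2) by auto
    then have "p \<ge> 3" using p2 by simp
    then have "1 / (real p - 1) < 1" by simp
    then show "\<exists>\<epsilon><1. almost_universal n k t \<epsilon>" using good_au h by blast
  qed
  have part2: "almost_universal n k t (1 / (real p - 1)) \<and>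
          (\<exists>m \<in> vecs n k. \<exists>m' \<in> vecs n k. m \<noteq> m' \<and>
              coll_prob n k t m m' = 1 / (real p - 1))" if h: "odd n \<and> (\<forall>i<k. t i = 1)"
    using good_au h tight[OF assms(1,2) _ pp pmin] by blast
  show ?thesis unfolding Let_def p_def[symmetric] using part1 part2 by blast
qed

end
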